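(* For every integer $k\geq 1$, in $\mathbb{Q}(t)$, $$\frac{2-t}{t^{\lfloor\log_2 k\rfloor}}\cdot\frac{S_{2k+1}(t)}{B_{2k+1}(t)}=\frac{2-t}{t^{\lfloor\log_2 k\rfloor}}\cdot\frac{S_k(t)}{B_k(t)}+\frac{B_{k+1}(t)-(t-1)(B_k(t)+1)}{B_k(t)B_{2k+1}(t)}.$$
   Context: The Stern polynomials $B_n(t)\in\mathbb{Z}[t]$ are defined by $B_0(t)=0$, $B_1(t)=1$, and for $n\geq 1$: $B_{2n}(t)=tB_n(t)$, $B_{2n+1}(t)=B_n(t)+B_{n+1}(t)$ (and $B_n\neq 0$ for $n\ge1$). The polynomials $S_n(t)$, $n\ge1$, are defined by $S_1(t)=S_2(t)=0$ and, for $k\geq 1$, $S_{2k}(t)=tS_k(t)$, $S_{2k+1}(t)=S_k(t)+S_{k+1}(t)+t^{\lfloor\log_2 k\rfloor}$. *)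

theory Defs
  imports Complex_Main "HOL-Computational_Algebra.Polynomial_Factorial"
begin

function stern :: "nat \<Rightarrow> int poly" where
  "stern n = (if n = 0 then 0 else if n = 1 then 1
              else if even n then [:0, 1:] * stern (n div 2)
              else stern (n div 2) + stern (n div 2 + 1))"
  by pat_completeness auto
termination by (relation "measure id") (auto, presburger+)

text \<open>The polynomials S_n(t), n \<ge> 1 (value at 0 is irrelevant, set to 0).\<close>
function sternS :: "nat \<Rightarrow> int poly" where
  "sternS n = (if n \<le> 2 then 0
              else if even n then [:0, 1:] * sternS (n div 2)
              else sternS (n div 2) + sternS (n div 2 + 1)
                   + [:0, 1:] ^ nat \<lfloor>log 2 (real (n div 2))\<rfloor>)"
  by pat_completeness auto
termination by (relation "measure id") (auto elim!: oddE)

definition toQt :: "int poly \<Rightarrow> rat poly fract" where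
  "toQt p = to_fract (map_poly of_int p)"

end

theory Submission
  imports Defs "HOL-Library.Log_Nat"
begin

declare stern.simps[simp del] sternS.simps[simp del]

definition ee :: "nat \<Rightarrow> nat" where "ee k = nat \<lfloor>log 2 (real k)\<rfloor>"

lemma ee_div: "ee n = ee (n div 2) + 1" if "n div 2 \<ge> 1" for n
proof -
  have "\<lfloor>log (real (2::nat)) (real n)\<rfloor> = \<lfloor>log (real (2::nat)) (real (n div 2))\<rfloor> + 1"
    using that by (intro floor_log_div) auto
  moreover have "\<lfloor>log 2 (real (n div 2))\<rfloor> \<ge> 0" using that by auto
  ultimately show ?thesis unfolding ee_def by (simp add: nat_add_distrib)
qed

lemma stern_even: "stern (2*m) = [:0,1:] * stern m" if "m \<ge> 1"
  using that by (subst stern.simps) auto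
lemma stern_odd: "stern (2*m+1) = stern m + stern (m+1)" if "m \<ge> 1"
  using that by (subst stern.simps) auto
lemma stern1: "stern 1 = 1" by (subst stern.simps) auto
lemma stern2: "stern 2 = [:0,1:]"
  using stern_even[of 1] stern1 by simp
lemma sternS_even: "sternS (2*m) = [:0,1:] * sternS m" if "m \<ge> 1"
proof (cases "m = 1")
  case True then show ?thesis by (simp add: sternS.simps)
next
  case False then show ?thesis using that by (subst sternS.simps) auto
qed
lemma sternS_odd: "sternS (2*m+1) = sternS m + sternS (m+1) + [:0,1:] ^ ee m" if "m \<ge> 1"
  using that by (subst sternS.simps) (auto simp: ee_def)
lemma sternS12: "sternS 1 = 0" "sternS 2 = 0" by (simp_all add: sternS.simps)

lemma gen_even:
  fixes t a b s s' p :: "'a::comm_ring_1"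
  assumes "(2-t)*(s'*a - s*b) = p*(b-a+1-t)"
  shows "(2-t)*((s+s'+p)*(t*a) - (t*s)*(a+b)) = (p*t)*((a+b) - t*a + 1 - t)"
proof -
  have "(2-t)*((s+s'+p)*(t*a) - (t*s)*(a+b)) - (p*t)*((a+b) - t*a + 1 - t)
     = t*((2-t)*(s'*a - s*b) - p*(b-a+1-t))" by (simp add: algebra_simps)
  then show ?thesis using assms by simp
qed

lemma gen_odd:
  fixes t a b s s' p :: "'a::comm_ring_1"
  assumes "(2-t)*(s'*a - s*b) = p*(b-a+1-t)"
  shows "(2-t)*((t*s')*(a+b) - (s+s'+p)*(t*b)) = (p*t)*(t*b - (a+b) + 1 - t)"
proof -
  have "(2-t)*((t*s')*(a+b) - (s+s'+p)*(t*b)) - (p*t)*(t*b - (a+b) + 1 - t)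
     = t*((2-t)*(s'*a - s*b) - p*(b-a+1-t))" by (simp add: algebra_simps)
  then show ?thesis using assms by simp
qed

lemma key: "k \<ge> 1 \<Longrightarrow> (2 - [:0,1:]) * (sternS (k+1) * stern k - sternS k * stern (k+1))
   = [:0,1:]^ee k * (stern (k+1) - stern k + 1 - [:0,1:])"
proof (induction k rule: less_induct)
  case (less k)
  show ?case
  proof (cases "k = 1")
    case True
    have "k + 1 = 2" using True by simp
    then show ?thesis using stern1 stern2[unfolded numeral_2_eq_2] sternS12(1) sternS12(2)[unfolded numeral_2_eq_2] True by (simp add: ee_def)
  next
    case False
    define m where "m = k div 2"
    have m: "k = 2*m \<or> k = 2*m+1" "m \<ge> 1" using less.prems False unfolding m_def by presburger+
    have IH: "(2 - [:0,1:]) * (sternS (m+1) * stern m - sternS m * stern (m+1))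
   = [:0,1:]^ee m * (stern (m+1) - stern m + 1 - [:0,1:])"
      using less.IH[of m] m by auto
    from m(1) show ?thesis
    proof
      assume k: "k = 2*m"
      have e: "ee k = ee m + 1" using ee_div[of k] k m by auto
      have s1: "sternS (k+1) = sternS m + sternS (m+1) + [:0,1:] ^ ee m"
        using sternS_odd[OF m(2)] k by simp
      have b1: "stern (k+1) = stern m + stern (m+1)" using stern_odd[OF m(2)] k by simp
      show ?thesis unfolding s1 b1 e power_add power_one_right unfolding k
        stern_even[OF m(2)] sternS_even[OF m(2)] by (rule gen_even[OF IH])
    next
      assume k: "k = 2*m+1"
      have e: "ee k = ee m + 1" using ee_div[of k] k m by auto
      have s1: "sternS (k+1) = [:0,1:] * sternS (m+1)"
        using sternS_even[of "m+1"] k by (simp add: mult_2)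
      have b1: "stern (k+1) = [:0,1:] * stern (m+1)"
        using stern_even[of "m+1"] k by (simp add: mult_2)
      show ?thesis unfolding s1 b1 e power_add power_one_right unfolding k
        stern_odd[OF m(2)] sternS_odd[OF m(2)] by (rule gen_odd[OF IH])
    qed
  qed
qed

lemma stern_pos: "n \<ge> 1 \<Longrightarrow> poly (stern n) 1 > 0"
proof (induction n rule: less_induct)
  case (less n)
  show ?case
  proof (cases "n = 1")
    case True then show ?thesis unfolding True stern1 by simp
  next
    case False
    define m where "m = n div 2"
    have m: "n = 2*m \<or> n = 2*m+1" "m \<ge> 1" using less.prems False unfolding m_def by presburger+
    have I1: "poly (stern m) 1 > 0" using less.IH[of m] m by auto
    from m(1) show ?thesis
    proof
      assume "n = 2*m" then show ?thesis using I1 by (simp add: stern_even[OF m(2)])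
    next
      assume n: "n = 2*m+1"
      have "poly (stern (m+1)) 1 > 0" using less.IH[of "m+1"] m n by auto
      then show ?thesis using I1 unfolding n stern_odd[OF m(2)] by simp
    qed
  qed
qed

lemma stern_nz: "n \<ge> 1 \<Longrightarrow> stern n \<noteq> 0"
  using stern_pos[of n] by auto

lemma mp_mult: "map_poly (of_int :: int \<Rightarrow> rat) (p*q) = map_poly of_int p * map_poly of_int q"
  by (rule poly_eqI) (simp add: coeff_mult coeff_map_poly)
lemma mp_add: "map_poly (of_int :: int \<Rightarrow> rat) (p+q) = map_poly of_int p + map_poly of_int q"
  by (rule poly_eqI) (simp add: coeff_map_poly)
lemma mp_diff: "map_poly (of_int :: int \<Rightarrow> rat) (p-q) = map_poly of_int p - map_poly of_int q"
  by (rule poly_eqI) (simp add: coeff_map_poly)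

lemma toQt_mult: "toQt (p*q) = toQt p * toQt q" by (simp add: toQt_def mp_mult)
lemma toQt_add: "toQt (p+q) = toQt p + toQt q" by (simp add: toQt_def mp_add)
lemma toQt_diff: "toQt (p-q) = toQt p - toQt q" by (simp add: toQt_def mp_diff)
lemma toQt_1: "toQt 1 = 1" by (simp add: toQt_def)
lemma toQt_2: "toQt 2 = 2"
  using toQt_add[of 1 1] toQt_1 by (simp add: one_add_one)
lemma toQt_pow: "toQt (p^n) = toQt p ^ n" by (induct n) (simp_all add: toQt_1 toQt_mult)
lemma toQt_eq0: "toQt p = 0 \<longleftrightarrow> p = 0"
  by (simp add: toQt_def map_poly_eq_0_iff)

lemma gen_field0:
  fixes t a q s s' p :: "'a::field"
  assumes "a \<noteq> 0" "q \<noteq> 0" "p \<noteq> 0"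
  shows "(2-t)/p * ((s+s'+p)/q) - ((2-t)/p*(s/a) + ((q-a)-(t-1)*(a+1))/(a*q))
     = ((2-t)*(s'*a - s*(q-a)) - p*((q-a)-a+1-t)) / (p*a*q)"
  using assms by (simp add: field_simps)

lemma gen_field:
  fixes t a b s s' p :: "'a::field"
  assumes "a \<noteq> 0" "a + b \<noteq> 0" "p \<noteq> 0"
    and key: "(2-t)*(s'*a - s*b) = p*(b-a+1-t)"
  shows "(2-t)/p * ((s+s'+p)/(a+b)) = (2-t)/p*(s/a) + (b-(t-1)*(a+1))/(a*(a+b))"
proof -
  have "(2-t)/p * ((s+s'+p)/(a+b)) - ((2-t)/p*(s/a) + (b-(t-1)*(a+1))/(a*(a+b)))
     = ((2-t)*(s'*a - s*b) - p*(b-a+1-t)) / (p*a*(a+b))"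
    using gen_field0[OF assms(1,2,3), of t s s'] by simp
  then show ?thesis using key by simp
qed

theorem mainTheorem14:
  fixes k :: nat
  assumes "k \<ge> 1"
  defines "T \<equiv> toQt [:0, 1:]"
  defines "e \<equiv> nat \<lfloor>log 2 (real k)\<rfloor>"
  shows "(2 - T) / T ^ e * (toQt (sternS (2*k+1)) / toQt (stern (2*k+1)))
       = (2 - T) / T ^ e * (toQt (sternS k) / toQt (stern k))
         + (toQt (stern (k+1)) - (T - 1) * (toQt (stern k) + 1))
           / (toQt (stern k) * toQt (stern (2*k+1)))"
proof -
  have e: "e = ee k" by (simp add: e_def ee_def)
  have K: "(2 - T) * (toQt (sternS (k+1)) * toQt (stern k) - toQt (sternS k) * toQt (stern (k+1)))
     = T ^ e * (toQt (stern (k+1)) - toQt (stern k) + 1 - T)"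
    using arg_cong[OF key[OF assms(1)], of toQt]
    by (simp add: toQt_mult toQt_add toQt_diff toQt_1 toQt_2 toQt_pow T_def e)
  have TN: "T \<noteq> 0" unfolding T_def toQt_eq0 by simp
  have a: "toQt (stern k) \<noteq> 0" using stern_nz[OF assms(1)] toQt_eq0 by blast
  have c: "toQt (stern (2*k+1)) \<noteq> 0" using stern_nz[of "2*k+1"] toQt_eq0 by auto
  have c': "toQt (stern (2*k+1)) = toQt (stern k) + toQt (stern (k+1))"
    unfolding stern_odd[OF assms(1)] toQt_add ..
  have s': "toQt (sternS (2*k+1)) = toQt (sternS k) + toQt (sternS (k+1)) + T ^ e"
    unfolding sternS_odd[OF assms(1)] toQt_add toQt_pow T_def e ..
  show ?thesis unfolding s' c' using gen_field[OF a _ _ K] c c' TN by simp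
qed

end
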